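(* Let $(\lambda_n)_{n\in\mathbb{N}}$ be a sequence of complex numbers with $\sum_{n=0}^{\infty}|\lambda_n|<\infty$. Let $r\in(0,1)$, $L\in\mathbb{C}$, and let $(x_n)_{n\in\mathbb{N}}$ be a complex-valued sequence such that $\lim_{N\to\infty}\mathbb{E}^{\mathrm{Bin}(r)}_{n\le N}x_n=L$. Then \[ \lim_{N\to\infty}\mathbb{E}^{\mathrm{Bin}(r)}_{n\le N}\left(\sum_{k=0}^{n}\lambda_k x_{n-k}\right)=L\cdot\sum_{n=0}^{\infty}\lambda_n . \]
   Context: $\mathbb{N}=\{0,1,2,\dots\}$. For $r\in(0,1)$, a complex sequence $(y_n)_{n\in\mathbb{N}}$ and $N\in\mathbb{N}$, the $N$-th $r$-binomial average is $\mathbb{E}^{\mathrm{Bin}(r)}_{n\le N}y_n=\sum_{n=0}^{N}\binom{N}{n}r^n(1-r)^{N-n}y_n$. In the claim, the averaged sequence is $y_n=\sum_{k=0}^{n}\lambda_k x_{n-k}$. *)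

theory Defs
  imports "HOL-Analysis.Analysis"
begin

definition bin_avg :: "real \<Rightarrow> (nat \<Rightarrow> complex) \<Rightarrow> nat \<Rightarrow> complex" where
  "bin_avg r y N = (\<Sum>n=0..N. of_real (real (N choose n) * r ^ n * (1 - r) ^ (N - n)) * y n)"

end

theory Submission
  imports Defs
begin

lemma pascal:
  fixes y :: "nat \<Rightarrow> complex" and r :: real
  shows "bin_avg r y (Suc N) = of_real (1-r) * bin_avg r y N + of_real r * bin_avg r (\<lambda>n. y (Suc n)) N"
proof -
  define g where "g n = of_real (real (N choose n) * r ^ n * (1 - r) ^ (N - n)) * y n" for n
  define h where "h n = of_real (real (N choose n) * r ^ n * (1 - r) ^ (N - n)) * y (Suc n)" for n
  have e1: "bin_avg r y N = (\<Sum>n=0..Suc N. g n)"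
    unfolding bin_avg_def g_def by simp
  have e2: "bin_avg r y N = g 0 + (\<Sum>n=0..N. g (Suc n))"
    unfolding e1 by (simp only: atLeast0AtMost sum.atMost_Suc_shift)
  have e3: "bin_avg r (\<lambda>n. y (Suc n)) N = (\<Sum>n=0..N. h n)"
    unfolding bin_avg_def h_def by simp
  have e4: "bin_avg r y (Suc N) = of_real ((1-r) ^ Suc N) * y 0 + (\<Sum>n=0..N. of_real (real (Suc N choose Suc n) * r ^ Suc n * (1 - r) ^ (N - n)) * y (Suc n))"
    unfolding bin_avg_def atLeast0AtMost by (subst sum.atMost_Suc_shift) simp
  have t: "of_real (real (Suc N choose Suc n) * r ^ Suc n * (1 - r) ^ (N - n)) * y (Suc n)
     = of_real (1-r) * g (Suc n) + of_real r * h n" if "n \<le> N" for n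
  proof (cases "n = N")
    case True
    then show ?thesis by (simp add: g_def h_def)
  next
    case False
    then have "N - n = Suc (N - Suc n)" using that by simp
    then show ?thesis unfolding g_def h_def
      by (simp add: algebra_simps)
  qed
  have "bin_avg r y (Suc N) = of_real ((1-r) ^ Suc N) * y 0 + (\<Sum>n=0..N. of_real (1-r) * g (Suc n) + of_real r * h n)"
    unfolding e4 using t by (intro arg_cong2[where f="(+)"] sum.cong) auto
  also have "\<dots> = of_real ((1-r) ^ Suc N) * y 0 + of_real (1-r) * (\<Sum>n=0..N. g (Suc n)) + of_real r * (\<Sum>n=0..N. h n)"
    by (simp only: sum.distrib sum_distrib_left add.assoc)
  also have "\<dots> = of_real (1-r) * (g 0 + (\<Sum>n=0..N. g (Suc n))) + of_real r * (\<Sum>n=0..N. h n)"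
    by (simp add: g_def algebra_simps)
  finally show ?thesis using e2 e3 by simp
qed
lemma nr [simp]: "0 \<le> r \<Longrightarrow> r \<le> 1 \<Longrightarrow> cmod (1 - complex_of_real r) = 1 - r"
  by (metis abs_of_nonneg diff_ge_0_iff_ge norm_of_real of_real_1 of_real_diff)

lemma rec_bound:
  fixes a b :: "nat \<Rightarrow> complex" and r M :: real
  assumes "0 \<le> r" "r \<le> 1" "a 0 = 0" "\<And>N. a (Suc N) = of_real (1-r) * a N + of_real r * b N"
    "\<And>N. norm (b N) \<le> M" 
  shows "norm (a N) \<le> M"
proof (induction N)
  case 0
  have "0 \<le> M" using assms(5)[of 0] norm_ge_zero order_trans by blast
  then show ?case using assms(3) by simp
next
  case (Suc N)
  have "norm (a (Suc N)) \<le> norm (of_real (1-r) * a N) + norm (of_real r * b N)"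
    unfolding assms(4) by (rule norm_triangle_ineq)
  also have "\<dots> = (1-r) * norm (a N) + r * norm (b N)"
    using assms(1,2) by (simp add: norm_mult)
  also have "\<dots> \<le> (1-r) * M + r * M"
    using assms(1,2) Suc.IH assms(5)[of N] by (intro add_mono mult_left_mono) auto
  finally show ?case by (simp add: algebra_simps)
qed

lemma rec_lim:
  fixes a b :: "nat \<Rightarrow> complex" and r :: real and L :: complex
  assumes "0 < r" "r < 1" "\<And>N. a (Suc N) = of_real (1-r) * a N + of_real r * b N"
    "b \<longlonglongrightarrow> L"
  shows "a \<longlonglongrightarrow> L"
proof (rule LIMSEQ_I)
  fix e :: real assume e: "0 < e"
  obtain N1 where N1: "\<And>N. N \<ge> N1 \<Longrightarrow> norm (b N - L) < e/2"
    using LIMSEQ_D[OF assms(4), of "e/2"] e by auto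
  define D where "D = norm (a N1 - L)"
  have claim: "norm (a (N1 + k) - L) \<le> (1-r)^k * D + e/2" for k
  proof (induction k)
    case 0
    then show ?case using e by (simp add: D_def)
  next
    case (Suc k)
    have eq: "a (N1 + Suc k) - L = of_real (1-r) * (a (N1 + k) - L) + of_real r * (b (N1+k) - L)"
      using assms(3)[of "N1+k"] by (simp add: algebra_simps)
    have "norm (a (N1 + Suc k) - L) \<le> (1-r) * norm (a (N1 + k) - L) + r * norm (b (N1+k) - L)"
      unfolding eq using assms(1,2) norm_triangle_ineq[of "of_real (1-r) * (a (N1 + k) - L)" "of_real r * (b (N1+k) - L)"]
      by (simp add: norm_mult)
    also have "\<dots> \<le> (1-r) * ((1-r)^k * D + e/2) + r * (e/2)"
      using assms(1,2) Suc.IH N1[of "N1+k"] by (intro add_mono mult_left_mono) auto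
    also have "\<dots> = (1-r)^Suc k * D + e/2" by (simp add: field_simps)
    finally show ?case .
  qed
  have "(\<lambda>k. (1-r)^k * D) \<longlonglongrightarrow> 0"
    using assms(1,2) by (intro tendsto_mult_left_zero LIMSEQ_power_zero) auto
  then have "eventually (\<lambda>k. (1-r)^k * D < e/2) sequentially"
    using e by (intro order_tendstoD) auto
  then obtain K where K: "\<And>k. k \<ge> K \<Longrightarrow> (1-r)^k * D < e/2"
    unfolding eventually_sequentially by auto
  show "\<exists>no. \<forall>n\<ge>no. norm (a n - L) < e"
  proof (intro exI[of _ "N1+K"] allI impI)
    fix n assume "n \<ge> N1 + K"
    define k where "k = n - N1"
    have k: "n = N1 + k" "k \<ge> K" using \<open>n \<ge> N1 + K\<close> by (auto simp: k_def)
    show "norm (a n - L) < e" using claim[of k] K[OF k(2)] k(1) by simp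
  qed
qed
definition sh :: "nat \<Rightarrow> (nat \<Rightarrow> complex) \<Rightarrow> nat \<Rightarrow> complex" where
  "sh k x n = (if k \<le> n then x (n - k) else 0)"

lemma sh0: "sh 0 x = x" by (rule ext) (simp add: sh_def)
lemma sh_Suc_shift: "(\<lambda>n. sh (Suc k) x (Suc n)) = sh k x" by (rule ext) (simp add: sh_def)
lemma bin_avg_0: "bin_avg r y 0 = y 0" by (simp add: bin_avg_def)

lemma decomp:
  fixes lam x :: "nat \<Rightarrow> complex"
  shows "bin_avg r (\<lambda>n. \<Sum>k=0..n. lam k * x (n - k)) N = (\<Sum>k=0..N. lam k * bin_avg r (sh k x) N)"
proof -
  define w where "w n = (of_real (real (N choose n) * r ^ n * (1 - r) ^ (N - n)) :: complex)" for n
  have i: "(\<Sum>k=0..n. lam k * x (n - k)) = (\<Sum>k=0..N. lam k * sh k x n)" if "n \<le> N" for n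
    using that by (intro sum.mono_neutral_cong_left) (auto simp: sh_def)
  have "bin_avg r (\<lambda>n. \<Sum>k=0..n. lam k * x (n - k)) N = (\<Sum>n=0..N. w n * (\<Sum>k=0..N. lam k * sh k x n))"
    unfolding bin_avg_def w_def using i by (intro sum.cong) auto
  also have "\<dots> = (\<Sum>k=0..N. lam k * (\<Sum>n=0..N. w n * sh k x n))"
    unfolding sum_distrib_left by (subst sum.swap) (simp add: mult.left_commute)
  finally show ?thesis unfolding bin_avg_def w_def .
qed

theorem mainTheorem1:
  fixes lam x :: "nat \<Rightarrow> complex" and r :: real and L :: complex
  assumes "summable (\<lambda>n. norm (lam n))"
    and "0 < r" and "r < 1"
    and "(\<lambda>N. bin_avg r x N) \<longlonglongrightarrow> L"
  shows "(\<lambda>N. bin_avg r (\<lambda>n. \<Sum>k=0..n. lam k * x (n - k)) N) \<longlonglongrightarrow> L * (\<Sum>n. lam n)"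
proof -
  define A where "A k N = bin_avg r (sh k x) N" for k N
  have rec: "A (Suc k) (Suc N) = of_real (1-r) * A (Suc k) N + of_real r * A k N" for k N
    unfolding A_def pascal sh_Suc_shift ..
  have A0: "A (Suc k) 0 = 0" for k unfolding A_def bin_avg_0 by (simp add: sh_def)
  have "convergent (\<lambda>N. bin_avg r x N)" using assms(4) convergentI by blast
  then have "Bseq (\<lambda>N. bin_avg r x N)" by (rule convergent_imp_Bseq)
  then obtain M where M: "\<And>N. norm (bin_avg r x N) \<le> M" unfolding Bseq_def by auto
  have bnd: "norm (A k N) \<le> M" for k N
  proof (induction k arbitrary: N)
    case 0 then show ?case using M by (simp add: A_def sh0)
  next
    case (Suc k)
    show ?case
      by (rule rec_bound[where a="A (Suc k)" and b="A k" and r=r]) (use assms(2,3) A0 rec Suc.IH in auto)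
  qed
  have lim: "(\<lambda>N. A k N) \<longlonglongrightarrow> L" for k
  proof (induction k)
    case 0 then show ?case using assms(4) by (simp add: A_def sh0)
  next
    case (Suc k)
    show ?case
      by (rule rec_lim[where b="A k" and r=r]) (use assms(2,3) rec Suc.IH in auto)
  qed
  define a where "a k N = (if k \<le> N then lam k * A k N else 0)" for k N
  have T: "((\<lambda>N. suminf (\<lambda>k. a k N)) \<longlongrightarrow> suminf (\<lambda>k. lam k * L)) sequentially"
  proof (rule tannerys_theorem[where M="\<lambda>k. norm (lam k) * M", THEN conjunct2, THEN conjunct2])
    fix k
    have ev: "eventually (\<lambda>N. lam k * A k N = a k N) sequentially"
      unfolding eventually_sequentially a_def by (intro exI[of _ k]) auto
    show "((\<lambda>N. a k N) \<longlongrightarrow> lam k * L) sequentially"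
      by (rule Lim_transform_eventually[OF tendsto_mult[OF tendsto_const lim] ev])
  next
    show "eventually (\<lambda>(k,N). norm (a k N) \<le> norm (lam k) * M) (at_top \<times>\<^sub>F sequentially)"
      by (intro always_eventually) (auto simp: a_def norm_mult bnd mult_left_mono order_trans[OF norm_ge_zero bnd])
  next
    show "summable (\<lambda>k. norm (lam k) * M)" using assms(1) by (rule summable_mult2)
  qed auto
  have s1: "suminf (\<lambda>k. a k N) = bin_avg r (\<lambda>n. \<Sum>k=0..n. lam k * x (n - k)) N" for N
  proof -
    have "suminf (\<lambda>k. a k N) = (\<Sum>k\<in>{..N}. a k N)"
      by (rule suminf_finite) (auto simp: a_def)
    also have "\<dots> = (\<Sum>k=0..N. lam k * A k N)" by (simp add: atLeast0AtMost a_def)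
    finally show ?thesis by (simp add: decomp A_def)
  qed
  have s2: "suminf (\<lambda>k. lam k * L) = L * (\<Sum>n. lam n)"
    using suminf_mult2[OF summable_norm_cancel[OF assms(1)], of L] by (simp add: mult.commute)
  show ?thesis using T unfolding s1 s2 .
qed
end
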